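(* Let $n,t\ge1$ and $q,b\ge2$. Let $\boldsymbol{x}\in\Sigma_q^n$ and $\mathcal{U}\subseteq\mathcal{I}_{t,b}(\boldsymbol{x})$. For every $\alpha\in\Sigma_q\setminus\{x_1\}$ we have $|\mathcal{U}^{\alpha\succ x_1,b}|\le\frac12 N_{q,b}^+(n,t)$. Consequently, if $|\mathcal{U}|\ge N_{q,b}^+(n,t)+1$, then $|\mathcal{U}^{\alpha\succ x_1,b}|<|\mathcal{U}^{x_1\succ\alpha,b}|$ for every $\alpha\in\Sigma_q\setminus\{x_1\}$.
   Context: $\Sigma_q=\{0,\ldots,q-1\}$. A $b$-burst-insertion at position $i\in[1,n+1]$ transforms $x_1\cdots x_n$ into $x_1\cdots x_{i-1}y_1\cdots y_b x_i\cdots x_n$ for arbitrary $y_1\cdots y_b\in\Sigma_q^b$. $\mathcal{I}_{t,b}(\boldsymbol{x})$ is the set of all length-$(n+tb)$ sequences obtainable from $\boldsymbol{x}$ by $t$ successive $b$-burst-insertions. $N_{q,b}^+(n,t)=\max\{|\mathcal{I}_{t,b}(\boldsymbol{x})\cap\mathcal{I}_{t,b}(\boldsymbol{y})|:\boldsymbol{x}\ne\boldsymbol{y}\in\Sigma_q^n\}$. For $\mathcal{U}\subseteq\Sigma_q^{n+tb}$ and distinct $\alpha,\beta\in\Sigma_q$, $\mathcal{U}^{\alpha\succ\beta,b}$ is the set of $\boldsymbol{y}\in\mathcal{U}$ for which there is $i\in[1,t+1]$ with $y_{(i-1)b+1}=\alpha$ and $y_{(j-1)b+1}\notin\{\alpha,\beta\}$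 for all $j\in[1,i-1]$ (i.e., among positions $1,b+1,\ldots,tb+1$, the symbol $\alpha$ appears before $\beta$). *)

theory Defs
  imports Main
begin

definition seqs :: "nat \<Rightarrow> nat \<Rightarrow> nat list set" where
  "seqs q n = {xs. length xs = n \<and> set xs \<subseteq> {..<q}}"

definition burst_ins :: "nat \<Rightarrow> nat \<Rightarrow> nat list \<Rightarrow> nat list set" where
  "burst_ins q b xs = {take i xs @ ys @ drop i xs | i ys. i \<le> length xs \<and> ys \<in> seqs q b}"

fun ins_set :: "nat \<Rightarrow> nat \<Rightarrow> nat \<Rightarrow> nat list \<Rightarrow> nat list set" where
  "ins_set q b 0 xs = {xs}"
| "ins_set q b (Suc t) xs = (\<Union>zs \<in> ins_set q b t xs. burst_ins q b zs)"

definition Nplus :: "nat \<Rightarrow> nat \<Rightarrow> nat \<Rightarrow> nat \<Rightarrow> nat" where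
  "Nplus q b n t = Max {card (ins_set q b t x \<inter> ins_set q b t y) | x y.
       x \<in> seqs q n \<and> y \<in> seqs q n \<and> x \<noteq> y}"

text \<open>U^{alpha > beta, b}: among (1-indexed) positions 1, b+1, ..., tb+1, i.e. 0-indexed
  positions j*b for j = 0..t, the symbol alpha occurs before beta.\<close>
definition prec_set :: "nat list set \<Rightarrow> nat \<Rightarrow> nat \<Rightarrow> nat \<Rightarrow> nat \<Rightarrow> nat list set" where
  "prec_set U t b \<alpha> \<beta> = {y \<in> U. \<exists>i \<le> t. y ! (i * b) = \<alpha> \<and>
       (\<forall>j < i. y ! (j * b) \<notin> {\<alpha>, \<beta>})}"

end

theory Submission
  imports Defs
begin


lemma ins_len: "ys \<in> ins_set q b t xs \<Longrightarrow> length ys = length xs + t*b"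
  by (induction t arbitrary: ys) (auto simp: burst_ins_def seqs_def)

lemma ins_alpha: "set xs \<subseteq> {..<q} \<Longrightarrow> ys \<in> ins_set q b t xs \<Longrightarrow> set ys \<subseteq> {..<q}"
proof (induction t arbitrary: ys)
  case (Suc t)
  then show ?case
    apply (auto simp: burst_ins_def seqs_def)
    by (meson in_set_dropD in_set_takeD lessThan_iff subsetD)+
qed auto

lemma finite_seqs: "finite (seqs q n)"
proof -
  have "seqs q n = {xs. set xs \<subseteq> {..<q} \<and> length xs = n}" by (auto simp: seqs_def)
  then show ?thesis using finite_lists_length_eq[of "{..<q}" n] by simp
qed

lemma ins_finite: "finite (ins_set q b t xs)"
proof (induction t)
  case (Suc t)
  have "\<And>zs. burst_ins q b zs = (\<lambda>(i,ys). take i zs @ ys @ drop i zs) ` ({..length zs} \<times> seqs q b)"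
    by (auto simp: burst_ins_def)
  then have "\<And>zs. finite (burst_ins q b zs)" using finite_seqs by simp
  then show ?case using Suc by simp
qed simp

lemma ins_app_right: "u \<in> ins_set q b t a \<Longrightarrow> u @ c \<in> ins_set q b t (a @ c)"
proof (induction t arbitrary: u)
  case (Suc t)
  then obtain zs i ys where zs: "zs \<in> ins_set q b t a" and u: "u = take i zs @ ys @ drop i zs"
    and i: "i \<le> length zs" and ys: "ys \<in> seqs q b" by (auto simp: burst_ins_def)
  have "u @ c = take i (zs @ c) @ ys @ drop i (zs @ c)" using u i by simp
  moreover have "i \<le> length (zs @ c)" using i by simp
  ultimately have "u @ c \<in> burst_ins q b (zs @ c)" using ys unfolding burst_ins_def by blast
  then show ?case using Suc.IH[OF zs] by auto
qed simp

lemma ins_app_left: "u \<in> ins_set q b t a \<Longrightarrow> c @ u \<in> ins_set q b t (c @ a)"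
proof (induction t arbitrary: u)
  case (Suc t)
  then obtain zs i ys where zs: "zs \<in> ins_set q b t a" and u: "u = take i zs @ ys @ drop i zs"
    and i: "i \<le> length zs" and ys: "ys \<in> seqs q b" by (auto simp: burst_ins_def)
  have "c @ u = take (length c + i) (c @ zs) @ ys @ drop (length c + i) (c @ zs)" using u i by simp
  moreover have "length c + i \<le> length (c @ zs)" using i by simp
  ultimately have "c @ u \<in> burst_ins q b (c @ zs)" using ys unfolding burst_ins_def by blast
  then show ?case using Suc.IH[OF zs] by auto
qed simp

lemma ins_trans: "v \<in> ins_set q b t2 w \<Longrightarrow> w \<in> ins_set q b t1 a \<Longrightarrow> v \<in> ins_set q b (t1 + t2) a"
proof (induction t2 arbitrary: v)
  case (Suc t2)
  then obtain zs where "zs \<in> ins_set q b t2 w" "v \<in> burst_ins q b zs" by auto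
  then show ?case using Suc by auto
qed simp

lemma ins_concat: "u \<in> ins_set q b t1 a \<Longrightarrow> v \<in> ins_set q b t2 c \<Longrightarrow> u @ v \<in> ins_set q b (t1 + t2) (a @ c)"
  using ins_trans[OF ins_app_left[of v q b t2 c u] ins_app_right[of u q b t1 a c]] by simp

lemma ins_empty: "length w = m*b \<Longrightarrow> set w \<subseteq> {..<q} \<Longrightarrow> w \<in> ins_set q b m []"
proof (induction m arbitrary: w)
  case (Suc m)
  have "drop b w \<in> ins_set q b m []"
    by (rule Suc.IH) (use Suc.prems in \<open>auto dest: in_set_dropD\<close>)
  moreover have "take b w \<in> seqs q b" using Suc by (auto simp: seqs_def dest: in_set_takeD)
  moreover have "w = take 0 (drop b w) @ take b w @ drop 0 (drop b w)" by simp
  ultimately have "w \<in> burst_ins q b (drop b w)" unfolding burst_ins_def by blast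
  then show ?case using \<open>drop b w \<in> ins_set q b m []\<close> by auto
qed simp

lemma ins_build: "w \<in> ins_set q b m [] \<Longrightarrow> R \<in> ins_set q b s x' \<Longrightarrow> w @ d # R \<in> ins_set q b (m+s) (d#x')"
  using ins_concat[of w q b m "[]" "d # R" s "d # x'"] ins_app_left[of R q b s x' "[d]"] by simp

lemma ins_decomp: "y \<in> ins_set q b t (d#x') \<Longrightarrow>
   \<exists>k\<le>t. \<exists>w R. y = w @ d # R \<and> length w = k*b \<and> R \<in> ins_set q b (t-k) x'"
proof (induction t arbitrary: y)
  case 0
  then show ?case by force
next
  case (Suc t)
  then obtain zs i ys where zs: "zs \<in> ins_set q b t (d#x')" and y: "y = take i zs @ ys @ drop i zs"
    and i: "i \<le> length zs" and ys: "ys \<in> seqs q b" by (auto simp: burst_ins_def)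
  obtain k w R where k: "k \<le> t" and zsd: "zs = w @ d # R" and lw: "length w = k*b"
    and R: "R \<in> ins_set q b (t-k) x'" using Suc.IH[OF zs] by blast
  show ?case
  proof (cases "i \<le> length w")
    case True
    have "y = (take i w @ ys @ drop i w) @ d # R" using y zsd True by simp
    moreover have "length (take i w @ ys @ drop i w) = Suc k * b" using True lw ys by (simp add: seqs_def)
    moreover have "R \<in> ins_set q b (Suc t - Suc k) x'" using R by simp
    ultimately show ?thesis using k
      by (intro exI[of _ "Suc k"] conjI exI[of _ "take i w @ ys @ drop i w"] exI[of _ R]) auto
  next
    case False
    define i' where "i' = i - length w - 1"
    have ii: "i = length w + 1 + i'" using False i'_def by simp
    have "y = w @ d # (take i' R @ ys @ drop i' R)" using y zsd ii by simp
    moreover have "take i' R @ ys @ drop i' R \<in> burst_ins q b R"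
      using i zsd ii ys unfolding burst_ins_def by auto
    then have "take i' R @ ys @ drop i' R \<in> ins_set q b (Suc t - k) x'"
      using R k Suc_diff_le by auto
    ultimately show ?thesis using k lw by (intro exI[of _ k]) auto
  qed
qed

lemma ins_decomp_idx: "y \<in> ins_set q b t (d#x') \<Longrightarrow>
   \<exists>k\<le>t. k*b < length y \<and> y!(k*b) = d \<and> drop (k*b+1) y \<in> ins_set q b (t-k) x'"
proof -
  assume "y \<in> ins_set q b t (d#x')"
  then obtain k w R where "k \<le> t" "y = w @ d # R" "length w = k*b" "R \<in> ins_set q b (t-k) x'"
    using ins_decomp by blast
  then show ?thesis by (intro exI[of _ k]) (auto simp: nth_append)
qed

lemma ins_mid: "set y \<subseteq> {..<q} \<Longrightarrow> h \<le> k \<Longrightarrow> k*b < length y \<Longrightarrow>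
   drop (k*b+1) y \<in> ins_set q b s x' \<Longrightarrow> drop (h*b+1) y \<in> ins_set q b (k-h+s) x'"
proof -
  assume a: "set y \<subseteq> {..<q}" "h \<le> k" "k*b < length y" "drop (k*b+1) y \<in> ins_set q b s x'"
  define m where "m = drop (h*b+1) (take (k*b+1) y)"
  have hk: "h*b \<le> k*b" using a(2) by simp
  have lm: "length m = (k-h)*b" using a(3) hk by (simp add: m_def diff_mult_distrib)
  have sm: "set m \<subseteq> {..<q}" using a(1) unfolding m_def by (meson in_set_dropD in_set_takeD subset_iff)
  have "drop (h*b+1) y = m @ drop (k*b+1) y"
  proof -
    have "drop (h*b+1) y = drop (h*b+1) (take (k*b+1) y @ drop (k*b+1) y)" by simp
    also have "\<dots> = drop (h*b+1) (take (k*b+1) y) @ drop (h*b+1 - length (take (k*b+1) y)) (drop (k*b+1) y)"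
      by (rule drop_append)
    also have "h*b+1 - length (take (k*b+1) y) = 0" using a(3) hk by simp
    finally show ?thesis unfolding m_def by simp
  qed
  moreover have "m \<in> ins_set q b (k-h) []" using ins_empty[OF lm sm] .
  ultimately show ?thesis using ins_concat[OF _ a(4)] by fastforce
qed

lemma ins_G: "set y \<subseteq> {..<q} \<Longrightarrow> h*b < length y \<Longrightarrow>
   drop (h*b+1) y \<in> ins_set q b s x' \<Longrightarrow> y \<in> ins_set q b (h+s) (y!(h*b) # x')"
proof -
  assume a: "set y \<subseteq> {..<q}" "h*b < length y" "drop (h*b+1) y \<in> ins_set q b s x'"
  have "take (h*b) y \<in> ins_set q b h []"
    using a by (intro ins_empty) (auto dest: in_set_takeD)
  from ins_build[OF this a(3)] have "take (h*b) y @ y!(h*b) # drop (h*b+1) y \<in> ins_set q b (h+s) (y!(h*b) # x')" .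
  then show ?thesis using id_take_nth_drop[OF a(2)] by simp
qed



definition swp :: "nat \<Rightarrow> nat \<Rightarrow> nat \<Rightarrow> nat" where
  "swp a c v = (if v = a then c else if v = c then a else v)"

definition Phi :: "nat \<Rightarrow> nat \<Rightarrow> nat \<Rightarrow> nat \<Rightarrow> nat list \<Rightarrow> nat list" where
  "Phi b a c K y = map (\<lambda>i. if i mod b = 0 \<and> i div b \<le> K then swp a c (y!i) else y!i) [0..<length y]"

lemma swp_swp[simp]: "swp a c (swp a c v) = v" by (simp add: swp_def)

lemma Phi_len[simp]: "length (Phi b a c K y) = length y" by (simp add: Phi_def)

lemma Phi_nth: "i < length y \<Longrightarrow> Phi b a c K y ! i = (if i mod b = 0 \<and> i div b \<le> K then swp a c (y!i) else y!i)"
  by (simp add: Phi_def)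

lemma Phi_nth_blk: "0 < b \<Longrightarrow> j \<le> K \<Longrightarrow> j*b < length y \<Longrightarrow> Phi b a c K y ! (j*b) = swp a c (y!(j*b))"
  by (simp add: Phi_nth)

lemma Phi_inv[simp]: "Phi b a c K (Phi b a c K y) = y"
  by (rule nth_equalityI) (auto simp: Phi_nth)

lemma Phi_drop: "0 < b \<Longrightarrow> drop (K*b+1) (Phi b a c K y) = drop (K*b+1) y"
proof (rule nth_equalityI)
  assume b: "0 < b"
  fix i assume "i < length (drop (K*b+1) (Phi b a c K y))"
  then have i: "K*b+1+i < length y" by simp
  have "\<not> ((K*b+1+i) mod b = 0 \<and> (K*b+1+i) div b \<le> K)"
  proof
    assume h: "(K*b+1+i) mod b = 0 \<and> (K*b+1+i) div b \<le> K"
    then have "(K*b+1+i) div b * b = K*b+1+i" by (metis add_0 mod_div_mult_eq)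
    moreover have "(K*b+1+i) div b * b \<le> K * b" using h by simp
    ultimately show False by linarith
  qed
  then have e: "Phi b a c K y ! (K*b+1+i) = y ! (K*b+1+i)"
    unfolding Phi_nth[OF i] by (rule if_not_P)
  show "drop (K*b+1) (Phi b a c K y) ! i = drop (K*b+1) y ! i"
    using i e by simp
qed simp

lemma Phi_alpha: "a < q \<Longrightarrow> c < q \<Longrightarrow> set y \<subseteq> {..<q} \<Longrightarrow> set (Phi b a c K y) \<subseteq> {..<q}"
proof -
  assume "a < q" "c < q" "set y \<subseteq> {..<q}"
  then have "\<And>i. i < length y \<Longrightarrow> y!i < q" by (meson lessThan_iff nth_mem subsetD)
  then show ?thesis using \<open>a < q\<close> \<open>c < q\<close> by (auto simp: Phi_def swp_def)
qed



lemma core: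
  assumes x: "set (c#x') \<subseteq> {..<q}" and aq: "\<alpha> < q" and ac: "\<alpha> \<noteq> c" and b: "0 < b"
    and y: "y \<in> ins_set q b t (c#x')" and i: "i \<le> t" and yi: "y!(i*b) = \<alpha>"
    and pre: "\<forall>j<i. y!(j*b) \<notin> {\<alpha>,c}"
    and kdef: "k = (LEAST k. k \<le> t \<and> y!(k*b) = c)"
  shows "y \<in> ins_set q b t (\<alpha>#x') \<and> Phi b \<alpha> c k y \<in> ins_set q b t (c#x')
    \<and> Phi b \<alpha> c k y \<in> ins_set q b t (\<alpha>#x') \<and> Phi b \<alpha> c k y ! (i*b) = c
    \<and> (\<forall>j<i. Phi b \<alpha> c k y ! (j*b) \<notin> {\<alpha>,c})
    \<and> (LEAST j. j \<le> t \<and> Phi b \<alpha> c k y ! (j*b) = \<alpha>) = k"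
proof -
  have sy: "set y \<subseteq> {..<q}" using ins_alpha[OF x y] .
  have ly: "length y = Suc (length x') + t*b" using ins_len[OF y] by simp
  have bnd: "\<And>j. j \<le> t \<Longrightarrow> j*b < length y"
  proof -
    fix j assume "j \<le> t"
    then have "j*b \<le> t*b" by (rule mult_le_mono1)
    then show "j*b < length y" using ly by linarith
  qed
  obtain k0 where k0: "k0 \<le> t" "y!(k0*b) = c" "drop (k0*b+1) y \<in> ins_set q b (t-k0) x'"
    using ins_decomp_idx[OF y] by blast
  have Pk: "k \<le> t \<and> y!(k*b) = c" unfolding kdef by (rule LeastI[of _ k0]) (use k0 in auto)
  have kk0: "k \<le> k0" unfolding kdef by (rule Least_le) (use k0 in auto)
  have nc: "\<And>j. j < k \<Longrightarrow> y!(j*b) \<noteq> c"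
  proof -
    fix j assume j: "j < k"
    have "\<not> (j \<le> t \<and> y!(j*b) = c)" using not_less_Least[of j "\<lambda>k. k \<le> t \<and> y!(k*b) = c"] j kdef by blast
    then show "y!(j*b) \<noteq> c" using j Pk by auto
  qed
  have ik: "i < k"
  proof (rule ccontr)
    assume "\<not> i < k"
    then have "k < i \<or> k = i" by auto
    then show False
    proof
      assume "k < i" then show False using pre Pk by auto
    next
      assume "k = i" then show False using Pk yi ac by auto
    qed
  qed
  have dk: "drop (k*b+1) y \<in> ins_set q b (t-k) x'"
    using ins_mid[OF sy kk0 bnd[OF k0(1)] k0(3)] kk0 k0(1) by (simp add: algebra_simps)
  have "drop (i*b+1) y \<in> ins_set q b (k-i+(t-k)) x'"
    using ins_mid[OF sy _ bnd dk] ik Pk by auto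
  from ins_G[OF sy bnd[OF i] this] have y1: "y \<in> ins_set q b t (\<alpha>#x')"
    using yi ik Pk by simp
  define w where "w = Phi b \<alpha> c k y"
  have sw: "set w \<subseteq> {..<q}" unfolding w_def
    using Phi_alpha[OF aq _ sy] x by auto
  have lw: "length w = length y" unfolding w_def by simp
  have wdrop: "drop (k*b+1) w = drop (k*b+1) y" unfolding w_def using Phi_drop[OF b] .
  have wblk: "\<And>j. j \<le> k \<Longrightarrow> w!(j*b) = swp \<alpha> c (y!(j*b))"
    unfolding w_def using Phi_nth_blk[OF b] bnd Pk by auto
  have wk: "w!(k*b) = \<alpha>" using wblk[of k] Pk ac by (simp add: swp_def)
  have wi: "w!(i*b) = c" using wblk[of i] ik yi by (simp add: swp_def)
  have bndw: "\<And>j. j \<le> t \<Longrightarrow> j*b < length w" using bnd lw by simp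
  have dkw: "drop (k*b+1) w \<in> ins_set q b (t-k) x'" using wdrop dk by simp
  from ins_G[OF sw bndw[of k] dkw] have w1: "w \<in> ins_set q b t (\<alpha>#x')" using Pk wk by simp
  have "drop (i*b+1) w \<in> ins_set q b (k-i+(t-k)) x'"
    using ins_mid[OF sw _ bndw dkw] ik Pk by auto
  from ins_G[OF sw bndw[OF i] this] have w2: "w \<in> ins_set q b t (c#x')"
    using wi ik Pk by simp
  have wpre: "\<forall>j<i. w!(j*b) \<notin> {\<alpha>,c}"
    using wblk pre ik by (auto simp: swp_def)
  have wl: "(LEAST j. j \<le> t \<and> w!(j*b) = \<alpha>) = k"
  proof (rule Least_equality)
    show "k \<le> t \<and> w!(k*b) = \<alpha>" using Pk wk by simp
  next
    fix j assume j: "j \<le> t \<and> w!(j*b) = \<alpha>"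
    show "k \<le> j"
    proof (rule ccontr)
      assume "\<not> k \<le> j"
      then have "j < k" by simp
      then have "swp \<alpha> c (y!(j*b)) = \<alpha>" using wblk[of j] j by simp
      then have "y!(j*b) = c" by (auto simp: swp_def split: if_splits)
      then show False using nc \<open>j < k\<close> by blast
    qed
  qed
  show ?thesis using y1 w1 w2 wi wpre wl unfolding w_def by blast
qed

lemma prec_disj: "\<alpha> \<noteq> c \<Longrightarrow> prec_set V t b \<alpha> c \<inter> prec_set V t b c \<alpha> = {}"
proof (rule equals0I)
  fix y assume ac: "\<alpha> \<noteq> c" and "y \<in> prec_set V t b \<alpha> c \<inter> prec_set V t b c \<alpha>"
  then obtain i1 i2 where a: "y!(i1*b) = \<alpha>" "\<forall>j<i1. y!(j*b) \<notin> {\<alpha>,c}"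
    and d: "y!(i2*b) = c" "\<forall>j<i2. y!(j*b) \<notin> {c,\<alpha>}" unfolding prec_set_def by blast
  consider "i1 < i2" | "i2 < i1" | "i1 = i2" by linarith
  then show False
  proof cases
    case 1 then show ?thesis using a d by auto
  next
    case 2 then show ?thesis using a d by auto
  next
    case 3 then show ?thesis using a d ac by auto
  qed
qed

lemma prec_mono: "U \<subseteq> V \<Longrightarrow> prec_set U t b a c \<subseteq> prec_set V t b a c"
  unfolding prec_set_def by blast

lemma prec_sub: "prec_set U t b a c \<subseteq> U"
  unfolding prec_set_def by blast

lemma hit:
  assumes y: "y \<in> ins_set q b t (c#x')" and yV: "y \<in> V" and ac: "\<alpha> \<noteq> c"
  shows "y \<in> prec_set V t b \<alpha> c \<union> prec_set V t b c \<alpha>"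
proof -
  obtain k0 where k0: "k0 \<le> t" "y!(k0*b) = c" using ins_decomp_idx[OF y] by blast
  define P where "P = (\<lambda>i. i \<le> t \<and> y!(i*b) \<in> {\<alpha>,c})"
  define i where "i = (LEAST i. P i)"
  have Pi: "P i" unfolding i_def by (rule LeastI[of _ k0]) (use k0 in \<open>auto simp: P_def\<close>)
  have nP: "\<forall>j<i. y!(j*b) \<notin> {\<alpha>,c}"
  proof (intro allI impI)
    fix j assume j: "j < i"
    then have "\<not> P j" unfolding i_def by (rule not_less_Least)
    moreover have "j \<le> t" using Pi j by (auto simp: P_def)
    ultimately show "y!(j*b) \<notin> {\<alpha>,c}" by (simp add: P_def)
  qed
  show ?thesis
  proof (cases "y!(i*b) = \<alpha>")
    case True
    then have "y \<in> prec_set V t b \<alpha> c" using Pi nP yV unfolding prec_set_def P_def by blast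
    then show ?thesis by blast
  next
    case False
    then have "y!(i*b) = c" using Pi by (auto simp: P_def)
    moreover have "\<forall>j<i. y!(j*b) \<notin> {c,\<alpha>}" using nP by auto
    ultimately have "y \<in> prec_set V t b c \<alpha>" using Pi yV unfolding prec_set_def P_def by blast
    then show ?thesis by blast
  qed
qed



lemma key:
  assumes x: "set (c#x') \<subseteq> {..<q}" and aq: "\<alpha> < q" and ac: "\<alpha> \<noteq> c" and b: "0 < b"
  shows "2 * card (prec_set (ins_set q b t (c#x')) t b \<alpha> c)
     \<le> card (ins_set q b t (c#x') \<inter> ins_set q b t (\<alpha>#x'))"
proof -
  let ?Ix = "ins_set q b t (c#x')" and ?Iz = "ins_set q b t (\<alpha>#x')"
  define S1 where "S1 = prec_set ?Ix t b \<alpha> c"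
  define kf where "kf = (\<lambda>y. LEAST k. k \<le> t \<and> y!(k*b) = c)"
  define F where "F = (\<lambda>y. Phi b \<alpha> c (kf y) y)"
  have P: "\<And>y. y \<in> S1 \<Longrightarrow> y \<in> ?Iz \<and> F y \<in> ?Ix \<and> F y \<in> ?Iz \<and> F y \<in> prec_set ?Ix t b c \<alpha>
      \<and> (LEAST j. j \<le> t \<and> F y ! (j*b) = \<alpha>) = kf y"
  proof -
    fix y assume "y \<in> S1"
    then obtain i where y: "y \<in> ?Ix" and i: "i \<le> t" "y!(i*b) = \<alpha>" "\<forall>j<i. y!(j*b) \<notin> {\<alpha>,c}"
      unfolding S1_def prec_set_def by blast
    note cr = core[OF x aq ac b y i refl]
    then have "F y \<in> prec_set ?Ix t b c \<alpha>" unfolding prec_set_def F_def kf_def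
      using i(1) by (auto simp: insert_commute)
    then show "?thesis y" using cr unfolding F_def kf_def by blast
  qed
  have S1sub: "S1 \<subseteq> ?Ix \<inter> ?Iz" using P unfolding S1_def prec_set_def by blast
  have Fsub: "F ` S1 \<subseteq> ?Ix \<inter> ?Iz" using P by blast
  have dj: "S1 \<inter> F ` S1 = {}"
    using P prec_disj[OF ac, of ?Ix t b] unfolding S1_def by blast
  have inj: "inj_on F S1"
  proof (rule inj_onI)
    fix y1 y2 assume a: "y1 \<in> S1" "y2 \<in> S1" "F y1 = F y2"
    have "kf y1 = kf y2" using P[OF a(1)] P[OF a(2)] a(3) by simp
    then have "Phi b \<alpha> c (kf y1) (F y1) = Phi b \<alpha> c (kf y2) (F y2)" using a(3) by simp
    then show "y1 = y2" unfolding F_def by simp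
  qed
  have fin: "finite (?Ix \<inter> ?Iz)" using ins_finite by blast
  have "card (S1 \<union> F ` S1) = card S1 + card (F ` S1)"
  proof (rule card_Un_disjoint)
    show "finite S1" using finite_subset[OF S1sub fin] .
    show "finite (F ` S1)" using finite_subset[OF Fsub fin] .
  qed (rule dj)
  also have "card (F ` S1) = card S1" using card_image[OF inj] .
  finally have "2 * card S1 = card (S1 \<union> F ` S1)" by simp
  also have "\<dots> \<le> card (?Ix \<inter> ?Iz)" by (rule card_mono[OF fin]) (use S1sub Fsub in auto)
  finally show ?thesis unfolding S1_def .
qed

theorem lemma3p6:
  fixes q b n t :: nat and x :: "nat list" and U :: "nat list set"
  assumes "n \<ge> 1" and "t \<ge> 1" and "q \<ge> 2" and "b \<ge> 2"
    and "x \<in> seqs q n"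
    and "U \<subseteq> ins_set q b t x"
  shows "(\<forall>\<alpha> < q. \<alpha> \<noteq> x ! 0 \<longrightarrow>
            2 * card (prec_set U t b \<alpha> (x ! 0)) \<le> Nplus q b n t)
       \<and> (card U \<ge> Nplus q b n t + 1 \<longrightarrow>
            (\<forall>\<alpha> < q. \<alpha> \<noteq> x ! 0 \<longrightarrow>
               card (prec_set U t b \<alpha> (x ! 0)) < card (prec_set U t b (x ! 0) \<alpha>)))"
proof -
  have b: "0 < b" using assms by simp
  obtain c x' where xd: "x = c # x'" using assms(1,5) by (cases x) (auto simp: seqs_def)
  have sx: "set (c#x') \<subseteq> {..<q}" "length (c#x') = n" using assms(5) xd by (auto simp: seqs_def)
  have x0: "x ! 0 = c" using xd by simp
  have finM: "finite {card (ins_set q b t x \<inter> ins_set q b t y) | x y.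
       x \<in> seqs q n \<and> y \<in> seqs q n \<and> x \<noteq> y}"
  proof (rule finite_subset)
    show "{card (ins_set q b t x \<inter> ins_set q b t y) | x y.
       x \<in> seqs q n \<and> y \<in> seqs q n \<and> x \<noteq> y}
      \<subseteq> (\<lambda>p. card (ins_set q b t (fst p) \<inter> ins_set q b t (snd p))) ` (seqs q n \<times> seqs q n)"
      by force
    show "finite ((\<lambda>p. card (ins_set q b t (fst p) \<inter> ins_set q b t (snd p))) ` (seqs q n \<times> seqs q n))"
      using finite_seqs by simp
  qed
  have part1: "\<And>\<alpha>. \<alpha> < q \<Longrightarrow> \<alpha> \<noteq> c \<Longrightarrow> 2 * card (prec_set U t b \<alpha> c) \<le> Nplus q b n t"
  proof -
    fix \<alpha> assume aq: "\<alpha> < q" and ac: "\<alpha> \<noteq> c"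
    have zs: "\<alpha> # x' \<in> seqs q n" using sx aq by (auto simp: seqs_def)
    have zx: "\<alpha> # x' \<noteq> x" using xd ac by simp
    have "card (ins_set q b t x \<inter> ins_set q b t (\<alpha> # x')) \<le> Nplus q b n t"
      unfolding Nplus_def by (rule Max_ge[OF finM]) (use assms(5) zs zx in blast)
    moreover have "card (prec_set U t b \<alpha> c) \<le> card (prec_set (ins_set q b t x) t b \<alpha> c)"
      by (rule card_mono) (use finite_subset[OF prec_sub ins_finite] prec_mono[OF assms(6)] in auto)
    ultimately show "2 * card (prec_set U t b \<alpha> c) \<le> Nplus q b n t"
      using key[OF sx(1) aq ac b, of t] xd by simp
  qed
  have part2: "card U \<ge> Nplus q b n t + 1 \<Longrightarrow> \<alpha> < q \<Longrightarrow> \<alpha> \<noteq> c \<Longrightarrow>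
      card (prec_set U t b \<alpha> c) < card (prec_set U t b c \<alpha>)" for \<alpha>
  proof -
    assume cu: "card U \<ge> Nplus q b n t + 1" and aq: "\<alpha> < q" and ac: "\<alpha> \<noteq> c"
    have finU: "finite U" using assms(6) ins_finite finite_subset by blast
    have "U = prec_set U t b \<alpha> c \<union> prec_set U t b c \<alpha>"
      using hit[of _ q b t c x' U \<alpha>] assms(6) xd ac prec_sub by blast
    then have "card U = card (prec_set U t b \<alpha> c) + card (prec_set U t b c \<alpha>)"
      using card_Un_disjoint[of "prec_set U t b \<alpha> c" "prec_set U t b c \<alpha>"]
        prec_disj[OF ac, of U t b] finU prec_sub finite_subset by metis
    then show ?thesis using cu part1[OF aq ac] by linarith
  qed
  show ?thesis using part1 part2 x0 by auto
qed


end
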